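(* Let $k\in\mathbb{N}$, $g\in\mathbb{Z}$ with $-k<g\le k$, $b\in\mathbb{R}$, and $z\in\mathbb{C}$ with $\mathrm{Re}(z)>0$ and $\mathrm{Re}(1/z)\ge k/2$. Define \[ \mathcal{I}_{k,g,b}(z):=e^{\frac{2\pi b}{kz}}z^{\frac52}\int_{-\infty}^{\infty}e^{-\frac{2\pi u^2}{kz}}f_{k,g}(u)\,du,\qquad \mathcal{J}_{k,g,b}(z):=e^{\frac{2\pi b}{kz}}z^{\frac52}\int_{-\sqrt b}^{\sqrt b}e^{-\frac{2\pi u^2}{kz}}f_{k,g}(u)\,du\ \ (b>0), \] and $h_{g,k}:=k^2/g^2$ if $g\ne0$, $h_{g,k}:=1$ if $g=0$. Then: (1) if $b\le0$, then $|\mathcal{I}_{k,g,b}(z)|\ll |z|^{\frac52}h_{g,k}$; (2) if $b>0$, then $\mathcal{I}_{k,g,b}(z)=\mathcal{J}_{k,g,b}(z)+\mathcal{E}_{k,g,b}(z)$ where $|\mathcal{E}_{k,g,b}(z)|\ll|z|^{\frac52}h_{g,k}$; with implied constants independent of $k$, $g$ and $z$.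
   Context: For $k\in\mathbb{N}$, $g\in\mathbb{Z}$, $u\in\mathbb{R}$: $f_{k,g}(u):=\frac{\pi^2}{\sinh^2\left(\frac{\pi u}{k}-\frac{\pi i g}{2k}\right)}$ if $g\not\equiv0\pmod{2k}$, and $f_{k,g}(u):=\frac{\pi^2}{\sinh^2(\pi u/k)}-\frac{k^2}{u^2}$ if $g\equiv0\pmod{2k}$. $z^{5/2}$ denotes the principal branch. *)

theory Defs
  imports "HOL-Analysis.Analysis"
begin

definition f_kg :: "nat \<Rightarrow> int \<Rightarrow> real \<Rightarrow> complex" where
  "f_kg k g u =
     (if \<not> (2 * int k) dvd g
      then complex_of_real (pi^2) /
           (sinh (complex_of_real (pi * u / real k) - \<i> * complex_of_real (pi * real_of_int g / (2 * real k))))^2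
      else complex_of_real (pi^2 / (sinh (pi * u / real k))^2 - (real k)^2 / u^2))"

definition h_gk :: "int \<Rightarrow> nat \<Rightarrow> real" where
  "h_gk g k = (if g \<noteq> 0 then (real k)^2 / (real_of_int g)^2 else 1)"

definition integrand_kg :: "nat \<Rightarrow> int \<Rightarrow> complex \<Rightarrow> real \<Rightarrow> complex" where
  "integrand_kg k g z u = exp (- 2 * complex_of_real pi * complex_of_real (u^2) / (of_nat k * z)) * f_kg k g u"

definition I_kgb :: "nat \<Rightarrow> int \<Rightarrow> real \<Rightarrow> complex \<Rightarrow> complex" where
  "I_kgb k g b z = exp (2 * complex_of_real pi * complex_of_real b / (of_nat k * z)) * z powr (5/2)
      * integral UNIV (integrand_kg k g z)"

definition J_kgb :: "nat \<Rightarrow> int \<Rightarrow> real \<Rightarrow> complex \<Rightarrow> complex" where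
  "J_kgb k g b z = exp (2 * complex_of_real pi * complex_of_real b / (of_nat k * z)) * z powr (5/2)
      * integral {- sqrt b .. sqrt b} (integrand_kg k g z)"

end

theory Submission
  imports Defs "HOL-Probability.Distributions"
begin

lemma sinh_lower:
  fixes x :: real assumes "0 \<le> x" shows "x + x^3/6 \<le> sinh x"
proof -
  let ?a = "\<lambda>n. if even n then 0 else x ^ n /\<^sub>R fact n"
  have s: "?a sums sinh x" by (rule sinh_converges)
  have su: "sinh x = suminf ?a" using sums_unique[OF s] .
  have "sum ?a {..<4} \<le> suminf ?a"
    by (rule sum_le_suminf) (use s sums_summable assms in auto)
  moreover have "sum ?a {..<4} = x + x^3/6"
    by (simp add: lessThan_nat_numeral fact_numeral)
  ultimately show ?thesis unfolding su by linarith
qed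

lemma sin_lower:
  fixes t :: real assumes "0 \<le> t" "t \<le> 2" shows "t/3 \<le> sin t"
proof -
  have b: "\<bar>sin t - (\<Sum>m<3. sin_coeff m * t ^ m)\<bar> \<le> inverse (fact 3) * \<bar>t\<bar> ^ 3"
    by (rule Maclaurin_sin_bound)
  have s: "(\<Sum>m<3. sin_coeff m * t ^ m) = t"
    by (simp add: numeral_eq_Suc sin_coeff_def)
  have f: "inverse (fact 3 :: real) = 1/6" by (simp add: fact_numeral)
  have a: "\<bar>t\<bar> ^ 3 = t^3" using assms by simp
  have "\<bar>sin t - t\<bar> \<le> t^3/6" using b unfolding s f a by simp
  hence l: "t - t^3/6 \<le> sin t" unfolding abs_le_iff by linarith
  have "t^2 \<le> 2^2" using assms by (intro power_mono) auto
  hence "t * t^2 \<le> t * 4" using assms by (intro mult_left_mono) auto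
  hence "t^3 \<le> 4 * t" by (simp add: power3_eq_cube power2_eq_square mult.commute)
  thus ?thesis using l assms by linarith
qed

lemma norm_sinh_sq:
  fixes x y :: real
  shows "(sin y)^2 \<le> (cmod (sinh (complex_of_real x - \<i> * complex_of_real y)))^2"
proof -
  have "cmod (sinh (complex_of_real x - \<i> * complex_of_real y)) = cmod (sin (\<i> * (complex_of_real x - \<i> * complex_of_real y)))"
    by (simp add: sinh_conv_sin norm_mult)
  also have "\<i> * (complex_of_real x - \<i> * complex_of_real y) = Complex y x"
    by (simp add: complex_eq_iff)
  finally have e: "(cmod (sinh (complex_of_real x - \<i> * complex_of_real y)))^2 = (exp(2 * x) + inverse(exp(2 * x)) - 2 * cos(2 * y)) / 4"
    by (simp add: norm_sin_squared)
  have "2 \<le> exp(2*x) + inverse (exp (2*x))"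
    using exp_plus_inverse_exp by blast
  moreover have "cos (2*y) = 1 - 2 * (sin y)^2" by (simp add: cos_double_sin)
  ultimately have "(sin y)^2 \<le> (exp(2 * x) + inverse(exp(2 * x)) - 2 * cos(2 * y)) / 4" 
    by (simp add: algebra_simps)
  thus ?thesis unfolding e .
qed


lemma sinh_upper:
  fixes a :: real assumes "0 \<le> a" "a \<le> 1" shows "sinh a \<le> a + a^3/2"
proof -
  obtain t1 where t1: "\<bar>t1\<bar> \<le> \<bar>a\<bar>" "exp a = (\<Sum>m<3. (a ^ m) / fact m) + (exp t1 / fact 3) * a ^ 3"
    using Maclaurin_exp_le by blast
  obtain t2 where t2: "\<bar>t2\<bar> \<le> \<bar>-a\<bar>" "exp (-a) = (\<Sum>m<3. ((-a) ^ m) / fact m) + (exp t2 / fact 3) * (-a) ^ 3"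
    using Maclaurin_exp_le by blast
  have "exp t1 \<le> exp 1" "exp t2 \<le> exp 1" using t1(1) t2(1) assms by auto
  hence b: "exp t1 \<le> 3" "exp t2 \<le> 3" using exp_le by linarith+
  have e1: "exp a = 1 + a + a^2/2 + exp t1 * a^3/6" using t1(2) by (simp add: lessThan_nat_numeral fact_numeral)
  have e2: "exp (-a) = 1 - a + a^2/2 - exp t2 * a^3/6" using t2(2) by (simp add: lessThan_nat_numeral fact_numeral)
  have a3: "0 \<le> a^3" using assms by simp
  have "exp t1 * a^3 \<le> 3 * a^3" "exp t2 * a^3 \<le> 3 * a^3" using b a3 by (auto intro: mult_right_mono)
  moreover have "sinh a = (exp a - exp (-a))/2" by (simp add: sinh_def)
  ultimately show ?thesis unfolding e1 e2 by (simp add: field_simps)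
qed

lemma sinh_recip_bound:
  fixes x :: real assumes "x \<noteq> 0" shows "\<bar>1/(sinh x)^2 - 1/x^2\<bar> \<le> 5/4"
proof -
  define a where "a = \<bar>x\<bar>"
  have a: "a > 0" using assms by (simp add: a_def)
  have sq: "(sinh x)^2 = (sinh a)^2"
    by (cases "x \<ge> 0") (auto simp: a_def sinh_minus)
  have x2: "x^2 = a^2" by (simp add: a_def)
  have "0 \<le> a^3/6" using a by simp
  hence s1: "a \<le> sinh a" using sinh_lower[of a] a by linarith
  have sp: "0 < sinh a" using s1 a by linarith
  have "a^2 \<le> (sinh a)^2" using s1 a by (intro power_mono) linarith+
  hence 3: "1/(sinh a)^2 \<le> 1/a^2" using a sp by (intro divide_left_mono mult_pos_pos) auto
  have 4: "1/a^2 - 1/(sinh a)^2 \<le> 5/4"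
  proof (cases "a \<le> 1")
    case False
    hence "1 \<le> a^2" using a by (simp add: one_le_power)
    hence "1/a^2 \<le> 1" by (simp add: divide_le_eq_1)
    moreover have "0 \<le> 1/(sinh a)^2" by simp
    ultimately show ?thesis by linarith
  next
    case True
    define q where "q = 1 + a^2/2"
    have q: "q \<ge> 1" by (simp add: q_def)
    have "a*q = a + a^3/2" by (simp add: q_def algebra_simps power3_eq_cube power2_eq_square)
    hence s: "sinh a \<le> a*q" using sinh_upper[of a] a True by simp
    have ap: "0 < a*q" using a q by simp
    have "(sinh a)^2 \<le> (a*q)^2" using s sp by (intro power_mono) auto
    hence 2: "1/(a*q)^2 \<le> 1/(sinh a)^2" using ap sp by (intro divide_left_mono mult_pos_pos) auto
    have e1: "1/a^2 - 1/(a*q)^2 = (q^2-1)/(a^2*q^2)"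
      using a q by (simp add: field_simps power_mult_distrib)
    have "(q^2-1)/(a^2*q^2) \<le> (q^2-1)/(a^2)"
    proof -
      have "0 \<le> q^2 - 1" using q by (simp add: one_le_power)
      moreover have "a^2 \<le> a^2*q^2" using q a by (simp add: one_le_power)
      ultimately show ?thesis using a q by (intro divide_left_mono mult_pos_pos) auto
    qed
    also have "(q^2 - 1)/a^2 = 1 + a^2/4" using a by (simp add: q_def power2_eq_square field_simps)
    also have "\<dots> \<le> 5/4" using True a by (simp add: power_le_one)
    finally show ?thesis using e1 2 by linarith
  qed
  show ?thesis unfolding sq x2 abs_le_iff using 3 4 by linarith
qed

lemma f_bound:
  assumes k: "k > 0" and g: "- int k < g" "g \<le> int k"
  shows "cmod (f_kg k g u) \<le> 36 * h_gk g k"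
proof (cases "(2 * int k) dvd g")
  case True
  have g0: "g = 0"
  proof (rule ccontr)
    assume "g \<noteq> 0"
    from True obtain m where m: "g = 2 * int k * m" by (auto simp: dvd_def)
    with \<open>g \<noteq> 0\<close> have "m \<noteq> 0" by auto
    hence "\<bar>g\<bar> \<ge> 2 * int k" using k unfolding m by (simp add: abs_mult)
    thus False using g k by linarith
  qed
  have h: "h_gk g k = 1" by (simp add: h_gk_def g0)
  have "\<bar>pi^2 / (sinh (pi * u / real k))^2 - (real k)^2 / u^2\<bar> \<le> pi^2 * (5/4)"
  proof (cases "u = 0")
    case True thus ?thesis by simp
  next
    case False
    define x where "x = pi * u / real k"
    have x0: "x \<noteq> 0" using False k by (simp add: x_def)
    have "(real k)^2 / u^2 = pi^2 / x^2" using False k by (simp add: x_def field_simps power_mult_distrib)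
    hence "pi^2 / (sinh (pi * u / real k))^2 - (real k)^2 / u^2 = pi^2 * (1/(sinh x)^2 - 1/x^2)"
      by (simp add: x_def algebra_simps)
    hence "\<bar>pi^2 / (sinh (pi * u / real k))^2 - (real k)^2 / u^2\<bar> = pi^2 * \<bar>1/(sinh x)^2 - 1/x^2\<bar>"
      by (simp add: abs_mult)
    also have "\<dots> \<le> pi^2 * (5/4)" using sinh_recip_bound[OF x0] by (intro mult_left_mono) auto
    finally show ?thesis .
  qed
  moreover have "pi^2 \<le> 4^2" using pi_less_4 pi_gt_zero by (intro power_mono) auto
  hence "pi^2 \<le> 16" by simp
  ultimately have "\<bar>pi^2 / (sinh (pi * u / real k))^2 - (real k)^2 / u^2\<bar> \<le> 36" by linarith
  moreover have "f_kg k g u = complex_of_real (pi^2 / (sinh (pi * u / real k))^2 - (real k)^2 / u^2)"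
    unfolding f_kg_def using True by (subst if_not_P) auto
  ultimately show ?thesis by (simp only: h norm_of_real)
next
  case False
  have g0: "g \<noteq> 0" using False by auto
  define y where "y = pi * real_of_int g / (2 * real k)"
  have ay: "\<bar>y\<bar> = pi * \<bar>real_of_int g\<bar> / (2 * real k)" using k by (simp add: y_def abs_mult)
  have "\<bar>real_of_int g\<bar> \<le> real k" using g by linarith
  hence "\<bar>y\<bar> \<le> pi / 2" unfolding ay using k by (simp add: field_simps)
  hence ay2: "\<bar>y\<bar> \<le> 2" using pi_less_4 by linarith
  have "\<bar>y\<bar>/3 \<le> sin \<bar>y\<bar>" using sin_lower[OF _ ay2] by simp
  moreover have "0 \<le> \<bar>y\<bar>/3" by simp
  ultimately have "(\<bar>y\<bar>/3)^2 \<le> (sin \<bar>y\<bar>)^2" by (intro power_mono) auto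
  also have "(sin \<bar>y\<bar>)^2 = (sin y)^2" by (cases "y \<ge> 0") auto
  also have "\<dots> \<le> (cmod (sinh (complex_of_real (pi * u / real k) - \<i> * complex_of_real y)))^2"
    by (rule norm_sinh_sq)
  finally have lb: "(\<bar>y\<bar>/3)^2 \<le> (cmod (sinh (complex_of_real (pi * u / real k) - \<i> * complex_of_real y)))^2" .
  have ypos: "0 < (\<bar>y\<bar>/3)^2" using g0 k pi_gt_zero by (simp add: y_def)
  have "cmod (f_kg k g u) = pi^2 / (cmod (sinh (complex_of_real (pi * u / real k) - \<i> * complex_of_real y)))^2"
    using False by (simp add: f_kg_def y_def norm_divide norm_power)
  also have "\<dots> \<le> pi^2 / (\<bar>y\<bar>/3)^2" using lb ypos by (intro divide_left_mono mult_pos_pos) auto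
  also have "pi^2 / (\<bar>y\<bar>/3)^2 = 36 * h_gk g k"
    using g0 k by (simp add: ay h_gk_def field_simps power_mult_distrib)
  finally show ?thesis .
qed

lemma meas_sinhc[measurable]: "(sinh :: complex \<Rightarrow> complex) \<in> borel_measurable borel"
  by (intro borel_measurable_continuous_onI continuous_intros)
lemma meas_sinhr[measurable]: "(sinh :: real \<Rightarrow> real) \<in> borel_measurable borel"
  by (intro borel_measurable_continuous_onI continuous_intros)

lemma meas_f: "f_kg k g \<in> borel_measurable borel"
  unfolding f_kg_def by (cases "2 * int k dvd g") simp_all

lemma meas_int: "integrand_kg k g z \<in> borel_measurable borel"
  unfolding integrand_kg_def using meas_f by measurable

lemma meas_leb: "integrand_kg k g z \<in> borel_measurable (lebesgue_on UNIV)"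
  unfolding lebesgue_on_UNIV_eq by (rule measurable_completion) (simp add: meas_int)

lemma pt:
  assumes k: "k > 0" and z: "Re (1/z) \<ge> real k / 2" and d: "b' - u^2 \<le> 0"
  shows "cmod (exp (2 * complex_of_real pi * complex_of_real b' / (of_nat k * z)) *
     exp (- 2 * complex_of_real pi * complex_of_real (u^2) / (of_nat k * z))) \<le> exp (b'/2) * exp (- (u^2) / 2)"
proof -
  have znz: "z \<noteq> 0" using z k by auto
  have e: "2 * complex_of_real pi * complex_of_real b' / (of_nat k * z) + (- 2 * complex_of_real pi * complex_of_real (u^2) / (of_nat k * z))
     = complex_of_real (2*pi*(b' - u^2)/real k) * (1/z)"
    using k znz by (simp add: field_simps)
  define m where "m = 2*pi*Re(1/z)/real k"
  have m: "m \<ge> 1/2"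
  proof -
    have "pi * real k \<le> 2 * pi * Re (1/z)" using z pi_gt_zero by simp
    hence "pi \<le> m" using k by (simp add: m_def field_simps)
    thus ?thesis using pi_gt3 by linarith
  qed
  have re: "Re (complex_of_real a * w) = a * Re w" for a w by simp
  have "Re (complex_of_real (2*pi*(b' - u^2)/real k) * (1/z)) = m * (b' - u^2)"
    by (simp only: re) (simp add: m_def)
  also have "\<dots> \<le> (1/2) * (b' - u^2)" using m d by (intro mult_right_mono_neg) auto
  finally have "Re (complex_of_real (2*pi*(b' - u^2)/real k) * (1/z)) \<le> b'/2 + (- (u^2) / 2)" by simp
  hence "exp (Re (complex_of_real (2*pi*(b' - u^2)/real k) * (1/z))) \<le> exp (b'/2 + (- (u^2) / 2))"
    by (rule exp_mono)
  hence "exp (Re (complex_of_real (2*pi*(b' - u^2)/real k) * (1/z))) \<le> exp (b'/2) * exp (- (u^2) / 2)"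
    by (simp only: exp_add)
  moreover have "cmod (exp (2 * complex_of_real pi * complex_of_real b' / (of_nat k * z)) *
     exp (- 2 * complex_of_real pi * complex_of_real (u^2) / (of_nat k * z))) = exp (Re (complex_of_real (2*pi*(b' - u^2)/real k) * (1/z)))"
    by (simp only: exp_add[symmetric] e norm_exp_eq_Re)
  ultimately show ?thesis by (simp only:)
qed

lemma maj_int: "(\<lambda>u. c * std_normal_density u) integrable_on UNIV"
  by (intro integrable_on_mult_right integrable_on_lborel integrable_normal_density) simp

lemma maj_integral: "integral UNIV (\<lambda>u. c * std_normal_density u) = c"
proof -
  have "integral UNIV std_normal_density = 1"
  proof -
    have i: "integrable lborel std_normal_density" by (rule integrable_normal_density) simp
    have "integral\<^sup>L lborel std_normal_density = 1" by (rule integral_normal_density) simp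
    thus ?thesis using integral_lborel[OF i] by simp
  qed
  thus ?thesis by (simp add: integral_mult_right)
qed

lemma expn: "exp (- (u^2) / 2) = sqrt (2*pi) * std_normal_density u"
  by (simp add: std_normal_density_def)

lemma main_bound:
  assumes k: "k > 0" and g: "- int k < g" "g \<le> int k" and z: "Re (1/z) \<ge> real k / 2"
    and d: "b' - u^2 \<le> 0" and bb: "b' \<le> B"
  shows "cmod (exp (2 * complex_of_real pi * complex_of_real b' / (of_nat k * z)) * integrand_kg k g z u)
     \<le> (exp (B/2) * sqrt (2*pi) * 36 * h_gk g k) * std_normal_density u"
proof -
  have "cmod (exp (2 * complex_of_real pi * complex_of_real b' / (of_nat k * z)) * integrand_kg k g z u)
     = cmod (exp (2 * complex_of_real pi * complex_of_real b' / (of_nat k * z)) *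
     exp (- 2 * complex_of_real pi * complex_of_real (u^2) / (of_nat k * z))) * cmod (f_kg k g u)"
    by (simp add: integrand_kg_def norm_mult mult.assoc)
  also have "\<dots> \<le> (exp (b'/2) * exp (- (u^2) / 2)) * (36 * h_gk g k)"
    by (intro mult_mono pt f_bound k z d g) auto
  also have "\<dots> \<le> (exp (B/2) * exp (- (u^2) / 2)) * (36 * h_gk g k)"
    using bb by (intro mult_right_mono) (auto simp: h_gk_def)
  also have "(exp (B/2) * exp (- (u^2) / 2)) * (36 * h_gk g k) = (exp (B/2) * sqrt (2*pi) * 36 * h_gk g k) * std_normal_density u"
    by (simp only: expn mult_ac)
  finally show ?thesis .
qed

lemma generic_bound:
  fixes E P :: complex and G :: "real \<Rightarrow> complex"
  assumes Gi: "G integrable_on UNIV" and M: "M integrable_on UNIV"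
    and b: "\<And>u. cmod (E * G u) \<le> M u"
  shows "cmod (E * P * integral UNIV G) \<le> cmod P * integral UNIV M"
proof -
  have "E * P * integral UNIV G = P * integral UNIV (\<lambda>u. E * G u)"
    by (simp add: integral_mult_right)
  hence "cmod (E * P * integral UNIV G) = cmod P * cmod (integral UNIV (\<lambda>u. E * G u))"
    by (simp add: norm_mult)
  also have "\<dots> \<le> cmod P * integral UNIV M"
    by (intro mult_left_mono integral_norm_bound_integral integrable_on_mult_right Gi M b) auto
  finally show ?thesis .
qed

theorem lemma3p2:
  fixes b :: real
  shows "\<exists>C>0. \<forall>(k::nat) (g::int) (z::complex).
     k > 0 \<and> - int k < g \<and> g \<le> int k \<and> Re z > 0 \<and> Re (1 / z) \<ge> real k / 2 \<longrightarrow>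
       integrand_kg k g z integrable_on UNIV \<and>
       (b \<le> 0 \<longrightarrow> cmod (I_kgb k g b z) \<le> C * cmod z powr (5/2) * h_gk g k) \<and>
       (b > 0 \<longrightarrow> cmod (I_kgb k g b z - J_kgb k g b z) \<le> C * cmod z powr (5/2) * h_gk g k)"
proof -
  define C where "C = exp (\<bar>b\<bar>/2) * sqrt (2*pi) * 36"
  have Cpos: "C > 0" by (simp add: C_def)
  have "\<forall>(k::nat) (g::int) (z::complex).
     k > 0 \<and> - int k < g \<and> g \<le> int k \<and> Re z > 0 \<and> Re (1 / z) \<ge> real k / 2 \<longrightarrow>
       integrand_kg k g z integrable_on UNIV \<and>
       (b \<le> 0 \<longrightarrow> cmod (I_kgb k g b z) \<le> C * cmod z powr (5/2) * h_gk g k) \<and>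
       (b > 0 \<longrightarrow> cmod (I_kgb k g b z - J_kgb k g b z) \<le> C * cmod z powr (5/2) * h_gk g k)"
  proof (intro allI impI)
    fix k :: nat and g :: int and z :: complex
    assume H: "k > 0 \<and> - int k < g \<and> g \<le> int k \<and> Re z > 0 \<and> Re (1 / z) \<ge> real k / 2"
    hence k: "k > 0" and g: "- int k < g" "g \<le> int k" and z: "Re (1/z) \<ge> real k / 2" by auto
    define h where "h = h_gk g k"
    have h0: "0 \<le> h" by (simp add: h_def h_gk_def)
    define F where "F = integrand_kg k g z"
    define E where "E = exp (2 * complex_of_real pi * complex_of_real b / (of_nat k * z))"
    define P where "P = z powr (5/2)"
    define M where "M = (\<lambda>u. (exp (\<bar>b\<bar>/2) * sqrt (2*pi) * 36 * h) * std_normal_density u)"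
    have Mint: "M integrable_on UNIV" unfolding M_def by (rule maj_int)
    have Mi: "integral UNIV M = exp (\<bar>b\<bar>/2) * sqrt (2*pi) * 36 * h" unfolding M_def by (rule maj_integral)
    have Fb: "cmod (F u) \<le> M u" for u
      using main_bound[of k g z 0 u "\<bar>b\<bar>"] k g z by (simp add: F_def M_def h_def)
    have Fint: "F integrable_on UNIV"
    proof (rule measurable_bounded_by_integrable_imp_integrable[OF _ Mint])
      show "F \<in> borel_measurable (lebesgue_on UNIV)" unfolding F_def by (rule meas_leb)
    qed (auto simp: Fb)
    have nP: "cmod P = cmod z powr (5/2)" by (simp add: P_def norm_powr_real_powr')
    have fin: "cmod P * integral UNIV M = C * cmod z powr (5/2) * h"
      by (simp add: nP Mi C_def)
    show "integrand_kg k g z integrable_on UNIV \<and>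
       (b \<le> 0 \<longrightarrow> cmod (I_kgb k g b z) \<le> C * cmod z powr (5/2) * h_gk g k) \<and>
       (b > 0 \<longrightarrow> cmod (I_kgb k g b z - J_kgb k g b z) \<le> C * cmod z powr (5/2) * h_gk g k)"
    proof (intro conjI impI)
      show "integrand_kg k g z integrable_on UNIV" using Fint by (simp add: F_def)
    next
      assume b0: "b \<le> 0"
      have "cmod (E * P * integral UNIV F) \<le> cmod P * integral UNIV M"
      proof (rule generic_bound[OF Fint Mint])
        fix u
        show "cmod (E * F u) \<le> M u"
        proof -
          have "0 \<le> u^2" by simp
          hence d: "b - u^2 \<le> 0" using b0 by linarith
          show ?thesis using main_bound[OF k g(1) g(2) z d abs_ge_self] unfolding F_def M_def h_def E_def .
        qed
      qed
      thus "cmod (I_kgb k g b z) \<le> C * cmod z powr (5/2) * h_gk g k"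
        using fin by (simp add: I_kgb_def E_def P_def F_def h_def)
    next
      assume bpos: "b > 0"
      define S where "S = {- sqrt b .. sqrt b}"
      define F' where "F' = (\<lambda>u. if u \<in> S then 0 else F u)"
      define R where "R = (\<lambda>u. if u \<in> S then F u else 0)"
      have FS: "F integrable_on S" unfolding S_def by (rule integrable_on_subinterval[OF Fint]) simp
      hence Ri: "R integrable_on UNIV" unfolding R_def by (simp add: integrable_restrict_UNIV)
      have Rint: "integral UNIV R = integral S F" unfolding R_def by (rule integral_restrict_UNIV)
      have FF: "F' = (\<lambda>u. F u - R u)" by (auto simp: F'_def R_def)
      have F'i: "F' integrable_on UNIV" unfolding FF by (intro integrable_diff Fint Ri)
      have dif: "integral UNIV F - integral S F = integral UNIV F'"
        unfolding FF by (simp add: integral_diff Fint Ri Rint)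
      have "cmod (E * P * integral UNIV F') \<le> cmod P * integral UNIV M"
      proof (rule generic_bound[OF F'i Mint])
        fix u
        show "cmod (E * F' u) \<le> M u"
        proof (cases "u \<in> S")
          case True thus ?thesis by (simp add: F'_def M_def h0)
        next
          case False
          hence "sqrt b < \<bar>u\<bar>" by (auto simp: S_def)
          hence "sqrt b < sqrt (u^2)" by simp
          hence "b < u^2" using real_sqrt_less_iff by blast
          hence "b - u^2 \<le> 0" by simp
          then show ?thesis
            using main_bound[OF k g(1) g(2) z _ abs_ge_self, of b u] False unfolding F'_def F_def M_def h_def E_def by simp
        qed
      qed
      moreover have "I_kgb k g b z - J_kgb k g b z = E * P * integral UNIV F'"
        by (simp add: I_kgb_def J_kgb_def E_def P_def F_def S_def dif[symmetric] algebra_simps)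
      ultimately show "cmod (I_kgb k g b z - J_kgb k g b z) \<le> C * cmod z powr (5/2) * h_gk g k"
        using fin by (simp add: h_def)
    qed
  qed
  thus ?thesis using Cpos by blast
qed
end
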